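(* Let $f_1,\dots,f_T\in\mathcal F_X(\alpha,l,G)$. Online gradient descent (OGD) with stepsize $\gamma=1/l$ is defined by $$x_1=x_0,\qquad x_t=\Pi_X\big(x_{t-1}-\gamma\nabla f_{t-1}(x_{t-1})\big)\quad\text{for }2\le t\le T.$$ Its dynamic regret satisfies $\mathrm{Reg}(\mathrm{OGD},\mathcal L_T(L_T,\mathcal F_X(\alpha,l,G)))\le \delta L_T$, where $\delta=(\beta/l+1)\frac{G}{1-\kappa}$ and $\kappa=\sqrt{1-\alpha/l}$.
   Context: Setting: $X\subseteq\mathbb R^n$ is nonempty, compact and convex with diameter $D$. The parameter $\beta\ge0$, the initial point $x_0\in X$ and the horizon $T\ge1$ are fixed, and $\Pi_X$ is Euclidean projection onto $X$. Function class: for $0<\alpha\le l$ and $G>0$, $\mathcal F_X(\alpha,l,G)$ is the set of differentiable $f:\mathbb R^n\to\mathbb R$ that are $\alpha$-strongly convex and $l$-smooth on $\mathbb R^n$, meaning $$f(x)+\langle\nabla f(x),y-x\rangle+\tfrac\alpha2\|y-x\|^2\le f(y)\le f(x)+\langle\nabla f(x),y-x\rangle+\tfrac l2\|y-x\|^2,$$ and that satisfy $\|\nabla f\|\le G$ on $X$. Total cost: $C_1^T(x)=\sum_{t=1}^T(f_t(x_t)+\frac\beta2\|x_t-x_{t-1}\|^2)$. Path length: $\theta_t=\arg\min_X f_t$ and $\theta_0=x_0$. For $0\le L_T\le DT$, $\mathcal L_T(L_T,\mathcal F_X(\alpha,l,G))$ is the set of sequences $\{f_t\}_{t=1}^T\subseteq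 \mathcal F_X(\alpha,l,G)$ with $\sum_{t=1}^T\|\theta_t-\theta_{t-1}\|\le L_T$. Dynamic regret: $\mathrm{Reg}(\mathcal A,\mathcal L_T)=\sup_{\{f_t\}\in\mathcal L_T}\big(C_1^T(x^{\mathcal A})-\min_{x\in X^T}C_1^T(x)\big)$, where $x^{\mathcal A}$ is the output of the algorithm and $x^{\mathcal A}_0=x_0$. *)

theory Defs
  imports "HOL-Analysis.Analysis"
begin

definition grad :: "('a::real_inner \<Rightarrow> real) \<Rightarrow> 'a \<Rightarrow> 'a" where
  "grad f x = (THE g. GDERIV f x :> g)"

definition in_F :: "'a::euclidean_space set \<Rightarrow> real \<Rightarrow> real \<Rightarrow> real \<Rightarrow> ('a \<Rightarrow> real) \<Rightarrow> bool" where
  "in_F X \<alpha> l G f \<longleftrightarrow>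
     (\<forall>x. f differentiable (at x)) \<and>
     (\<forall>x y. f x + inner (grad f x) (y - x) + \<alpha> / 2 * (norm (y - x))\<^sup>2 \<le> f y) \<and>
     (\<forall>x y. f y \<le> f x + inner (grad f x) (y - x) + l / 2 * (norm (y - x))\<^sup>2) \<and>
     (\<forall>x\<in>X. norm (grad f x) \<le> G)"

text \<open>Minimiser of f over X (unique for strongly convex f on nonempty compact convex X).\<close>
definition argmin_on :: "'a set \<Rightarrow> ('a \<Rightarrow> real) \<Rightarrow> 'a" where
  "argmin_on X f = (SOME z. z \<in> X \<and> (\<forall>y\<in>X. f z \<le> f y))"

definition theta :: "'a set \<Rightarrow> 'a \<Rightarrow> (nat \<Rightarrow> 'a \<Rightarrow> real) \<Rightarrow> nat \<Rightarrow> 'a" where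
  "theta X x0 f t = (if t = 0 then x0 else argmin_on X (f t))"

definition path_length :: "'a::real_normed_vector set \<Rightarrow> 'a \<Rightarrow> (nat \<Rightarrow> 'a \<Rightarrow> real) \<Rightarrow> nat \<Rightarrow> real" where
  "path_length X x0 f T = (\<Sum>t=1..T. norm (theta X x0 f t - theta X x0 f (t - 1)))"

definition in_LT :: "'a::euclidean_space set \<Rightarrow> 'a \<Rightarrow> nat \<Rightarrow> real \<Rightarrow> real \<Rightarrow> real \<Rightarrow> real
                      \<Rightarrow> (nat \<Rightarrow> 'a \<Rightarrow> real) \<Rightarrow> bool" where
  "in_LT X x0 T L \<alpha> l G f \<longleftrightarrow>
     (\<forall>t\<in>{1..T}. in_F X \<alpha> l G (f t)) \<and> path_length X x0 f T \<le> L"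

text \<open>Total cost C_1^T(x); x 0 is the initial point.\<close>
definition cost :: "real \<Rightarrow> nat \<Rightarrow> (nat \<Rightarrow> 'a::real_normed_vector \<Rightarrow> real) \<Rightarrow> (nat \<Rightarrow> 'a) \<Rightarrow> real" where
  "cost \<beta> T f x = (\<Sum>t=1..T. f t (x t) + \<beta> / 2 * (norm (x t - x (t - 1)))\<^sup>2)"

fun ogd :: "'a::euclidean_space set \<Rightarrow> real \<Rightarrow> (nat \<Rightarrow> 'a \<Rightarrow> real) \<Rightarrow> 'a \<Rightarrow> nat \<Rightarrow> 'a" where
  "ogd X \<gamma> f x0 0 = x0"
| "ogd X \<gamma> f x0 (Suc 0) = x0"
| "ogd X \<gamma> f x0 (Suc (Suc n)) =
     closest_point X (ogd X \<gamma> f x0 (Suc n) - \<gamma> *\<^sub>R grad (f (Suc n)) (ogd X \<gamma> f x0 (Suc n)))"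

definition dyn_regret :: "'a set \<Rightarrow> 'a \<Rightarrow> real \<Rightarrow> nat \<Rightarrow> (nat \<Rightarrow> 'a::real_normed_vector \<Rightarrow> real)
                           \<Rightarrow> (nat \<Rightarrow> 'a) \<Rightarrow> real" where
  "dyn_regret X x0 \<beta> T f x =
     cost \<beta> T f x - (INF y\<in>{y. y 0 = x0 \<and> (\<forall>t\<in>{1..T}. y t \<in> X)}. cost \<beta> T f y)"

end

theory Submission
  imports Defs
begin

lemma contract:
  fixes f :: "'a::euclidean_space \<Rightarrow> real"
  assumes cl: "closed X" and cv: "convex X" and x: "x \<in> X" and th: "th \<in> X"
    and thmin: "\<forall>y\<in>X. f th \<le> f y"
    and sc: "\<forall>x y. f x + inner (grad f x) (y - x) + \<alpha> / 2 * (norm (y - x))\<^sup>2 \<le> f y"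
    and sm: "\<forall>x y. f y \<le> f x + inner (grad f x) (y - x) + l / 2 * (norm (y - x))\<^sup>2"
    and l: "l > 0"
  shows "(norm (closest_point X (x - (1/l) *\<^sub>R grad f x) - th))\<^sup>2 \<le> (1 - \<alpha>/l) * (norm (x - th))\<^sup>2"
proof -
  define g where "g = grad f x"
  define p where "p = closest_point X (x - (1/l) *\<^sub>R g)"
  define a where "a = x - th"
  define b where "b = x - p"
  have pX: "p \<in> X" unfolding p_def using closest_point_in_set[OF cl] x by blast
  have proj: "inner ((x - (1/l) *\<^sub>R g) - p) (th - p) \<le> 0"
    unfolding p_def by (rule closest_point_dot[OF cv cl th])
  have e1: "(norm (p - th))\<^sup>2 = (norm b)\<^sup>2 - 2 * inner a b + (norm a)\<^sup>2"
  proof -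
    have "p - th = a - b" unfolding a_def b_def by simp
    then show ?thesis by (simp add: power2_norm_eq_inner inner_diff_left inner_diff_right inner_commute)
  qed
  have e2: "inner ((x - (1/l) *\<^sub>R g) - p) (th - p) = (norm b)\<^sup>2 - inner a b - inner g b / l + inner g a / l"
  proof -
    have q: "(x - (1/l) *\<^sub>R g) - p = b - (1/l) *\<^sub>R g" "th - p = b - a" unfolding a_def b_def by simp_all
    have "inner (b - (1/l) *\<^sub>R g) (b - a) = (norm b)\<^sup>2 - inner a b - inner g b / l + inner g a / l"
      by (simp add: power2_norm_eq_inner inner_diff_left inner_diff_right inner_commute diff_divide_distrib)
    then show ?thesis by (simp only: q)
  qed
  have e3: "f x - inner g a + \<alpha>/2 * (norm a)\<^sup>2 \<le> f th"
  proof -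
    have "th - x = - a" unfolding a_def by simp
    then show ?thesis using sc[rule_format, of x th] unfolding g_def by simp
  qed
  have e4: "f p \<le> f x - inner g b + l/2 * (norm b)\<^sup>2"
  proof -
    have "p - x = - b" unfolding b_def by simp
    then show ?thesis using sm[rule_format, of x p] sm[rule_format, of p x] unfolding g_def by simp
  qed
  have e5: "f th \<le> f p" using thmin pX by blast
  have A: "l * (norm b)\<^sup>2 - l * inner a b - inner g b + inner g a \<le> 0"
  proof -
    have "l * ((norm b)\<^sup>2 - inner a b - inner g b / l + inner g a / l) \<le> 0"
      using proj e2 l by (simp add: mult_nonpos_nonneg mult_le_0_iff)
    then show ?thesis using l by (simp add: algebra_simps)
  qed
  have B: "l * ((norm b)\<^sup>2 - 2 * inner a b + (norm a)\<^sup>2) \<le> l * ((1 - \<alpha>/l) * (norm a)\<^sup>2)"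
  proof -
    have "l * ((1 - \<alpha>/l) * (norm a)\<^sup>2) = l * (norm a)\<^sup>2 - \<alpha> * (norm a)\<^sup>2"
      using l by (simp add: algebra_simps)
    then show ?thesis using A e3 e4 e5 by (simp add: algebra_simps)
  qed
  have "(norm b)\<^sup>2 - 2 * inner a b + (norm a)\<^sup>2 \<le> (1 - \<alpha>/l) * (norm a)\<^sup>2"
    using B l by simp
  then show ?thesis using e1 unfolding p_def g_def a_def by simp
qed

lemma sum_shift_le:
  fixes a b c :: "nat \<Rightarrow> real"
  assumes "a 1 \<le> b 1" "\<And>t. 1 \<le> t \<Longrightarrow> t < n \<Longrightarrow> a (Suc t) \<le> b (Suc t) + c t"
  shows "(\<Sum>t=1..n. a t) \<le> (\<Sum>t=1..n. b t) + (\<Sum>t\<in>{1..<n}. c t)"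
  using assms(2)
proof (induction n)
  case 0
  then show ?case by simp
next
  case (Suc n)
  show ?case
  proof (cases "n = 0")
    case True
    then show ?thesis using assms(1) by simp
  next
    case False
    have IH: "(\<Sum>t=1..n. a t) \<le> (\<Sum>t=1..n. b t) + (\<Sum>t\<in>{1..<n}. c t)"
      using Suc by simp
    have st: "a (Suc n) \<le> b (Suc n) + c n" using Suc.prems False by simp
    have s1: "(\<Sum>t=1..Suc n. a t) = (\<Sum>t=1..n. a t) + a (Suc n)" by simp
    have s2: "(\<Sum>t=1..Suc n. b t) = (\<Sum>t=1..n. b t) + b (Suc n)" by simp
    have s3: "(\<Sum>t\<in>{1..<Suc n}. c t) = (\<Sum>t\<in>{1..<n}. c t) + c n" using False by simp
    show ?thesis unfolding s1 s2 s3 using IH st by linarith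
  qed
qed

lemma in_F_D:
  assumes "in_F X \<alpha> l G f"
  shows "\<forall>x y. f x + inner (grad f x) (y - x) + \<alpha> / 2 * (norm (y - x))\<^sup>2 \<le> f y"
    and "\<forall>x y. f y \<le> f x + inner (grad f x) (y - x) + l / 2 * (norm (y - x))\<^sup>2"
    and "\<forall>x\<in>X. norm (grad f x) \<le> G"
    and "\<forall>x. f differentiable (at x)"
  using assms unfolding in_F_def by auto

theorem theorem1:
  fixes X :: "'a::euclidean_space set" and x0 :: 'a
    and \<alpha> l G \<beta> L :: real and T :: nat
  assumes "X \<noteq> {}" and "compact X" and "convex X"
    and "x0 \<in> X"
    and "\<beta> \<ge> 0" and "T \<ge> 1"
    and "0 < \<alpha>" and "\<alpha> \<le> l" and "G > 0"
    and "0 \<le> L" and "L \<le> diameter X * real T"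
  shows "\<forall>f. in_LT X x0 T L \<alpha> l G f \<longrightarrow>
           dyn_regret X x0 \<beta> T f (ogd X (1 / l) f x0)
             \<le> (\<beta> / l + 1) * (G / (1 - sqrt (1 - \<alpha> / l))) * L"
proof (intro allI impI)
  fix f assume LT: "in_LT X x0 T L \<alpha> l G f"
  have ne: "X \<noteq> {}" and cpt: "compact X" and cv: "convex X" and x0X: "x0 \<in> X"
    using assms by auto
  have cl: "closed X" using cpt compact_imp_closed by blast
  have l: "l > 0" using assms by linarith
  define \<kappa> where "\<kappa> = sqrt (1 - \<alpha> / l)"
  have k0: "0 \<le> \<kappa>" unfolding \<kappa>_def using assms l by simp
  have k1: "\<kappa> < 1" unfolding \<kappa>_def using assms l by simp
  have ksq: "\<kappa>\<^sup>2 = 1 - \<alpha> / l" unfolding \<kappa>_def using assms l by simp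
  define x where "x = ogd X (1 / l) f x0"
  define th where "th = theta X x0 f"
  have F: "\<And>t. t \<in> {1..T} \<Longrightarrow> in_F X \<alpha> l G (f t)" using LT unfolding in_LT_def by blast
  have PL: "(\<Sum>t=1..T. norm (th t - th (t - 1))) \<le> L"
    using LT unfolding in_LT_def path_length_def th_def by blast
  have thX: "th t \<in> X \<and> (\<forall>y\<in>X. f t (th t) \<le> f t y)" if t: "t \<in> {1..T}" for t
  proof -
    have "continuous_on X (f t)"
      using F[OF t] unfolding in_F_def
      by (meson differentiable_at_imp_differentiable_on differentiable_imp_continuous_on)
    then have "\<exists>z. z \<in> X \<and> (\<forall>y\<in>X. f t z \<le> f t y)"
      using continuous_attains_inf[OF cpt ne] by blast
    then have "argmin_on X (f t) \<in> X \<and> (\<forall>y\<in>X. f t (argmin_on X (f t)) \<le> f t y)"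
      unfolding argmin_on_def by (rule someI_ex)
    then show ?thesis using t unfolding th_def theta_def by simp
  qed
  have th0: "th 0 = x0" unfolding th_def theta_def by simp
  have xX: "x t \<in> X" for t
  proof (cases t)
    case (Suc n)
    then show ?thesis unfolding x_def by (cases n) (auto simp: x0X closest_point_in_set[OF cl ne])
  qed (simp add: x_def x0X)
  have x1: "x 1 = x0" unfolding x_def by simp
  have xstep: "x (Suc t) = closest_point X (x t - (1/l) *\<^sub>R grad (f t) (x t))" if t1: "t \<ge> 1" for t
  proof -
    obtain n where "t = Suc n" using t1 by (cases t) auto
    then show ?thesis unfolding x_def by simp
  qed
  define e where "e t = norm (x t - th t)" for t
  define d where "d t = norm (th t - th (t - 1))" for t
  have e0: "0 \<le> e t" for t unfolding e_def by simp
  have contr: "norm (x (Suc t) - th t) \<le> \<kappa> * e t" if t: "t \<in> {1..T}" for t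
  proof -
    have Ft: "in_F X \<alpha> l G (f t)" using F[OF t] .
    have "(norm (x (Suc t) - th t))\<^sup>2 \<le> (1 - \<alpha>/l) * (norm (x t - th t))\<^sup>2"
    proof -
      have xs: "x (Suc t) = closest_point X (x t - (1/l) *\<^sub>R grad (f t) (x t))" using xstep t by simp
      show ?thesis unfolding xs
        by (rule contract[OF cl cv xX conjunct1[OF thX[OF t]] conjunct2[OF thX[OF t]]
            in_F_D(1)[OF Ft] in_F_D(2)[OF Ft] l])
    qed
    also have "\<dots> = (\<kappa> * e t)\<^sup>2" unfolding e_def ksq[symmetric] by (simp add: power_mult_distrib)
    finally have "(norm (x (Suc t) - th t))\<^sup>2 \<le> (\<kappa> * e t)\<^sup>2" .
    moreover have "0 \<le> \<kappa> * e t" using k0 e0[of t] by simp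
    ultimately show ?thesis by (rule power2_le_imp_le)
  qed
  have move: "norm (x (Suc t) - x t) \<le> G / l" if t: "t \<in> {1..T}" for t
  proof -
    have "norm (x (Suc t) - x t) = dist (closest_point X (x t - (1/l) *\<^sub>R grad (f t) (x t))) (closest_point X (x t))"
      using xstep[of t] t closest_point_self[OF xX[of t]] by (simp add: dist_norm)
    also have "\<dots> \<le> dist (x t - (1/l) *\<^sub>R grad (f t) (x t)) (x t)"
      by (rule closest_point_lipschitz[OF cv cl ne])
    also have "\<dots> = norm (grad (f t) (x t)) / l" using l by (simp add: dist_norm)
    also have "\<dots> \<le> G / l" using in_F_D(3)[OF F[OF t]] xX[of t] l
      by (simp add: divide_right_mono)
    finally show ?thesis .
  qed
  define S where "S = (\<Sum>t=1..T. e t)"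
  have S0: "0 \<le> S" unfolding S_def by (simp add: e0 sum_nonneg)
  have Ssub: "(\<Sum>t\<in>{1..<T}. e t) \<le> S" unfolding S_def
    by (rule sum_mono2) (auto simp: e0)
  have rec: "S \<le> (\<Sum>t=1..T. d t) + (\<Sum>t\<in>{1..<T}. \<kappa> * e t)"
    unfolding S_def
  proof (rule sum_shift_le)
    show "e 1 \<le> d 1" unfolding e_def d_def using x1 th0 by (simp add: norm_minus_commute)
  next
    fix t assume t: "1 \<le> t" "t < T"
    have "e (Suc t) \<le> norm (x (Suc t) - th t) + norm (th (Suc t) - th t)"
      unfolding e_def using norm_triangle_ineq[of "x (Suc t) - th t" "th t - th (Suc t)"]
      by (simp add: norm_minus_commute)
    also have "\<dots> \<le> \<kappa> * e t + d (Suc t)" using contr[of t] t unfolding d_def by simp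
    finally show "e (Suc t) \<le> d (Suc t) + \<kappa> * e t" by simp
  qed
  have "(\<Sum>t\<in>{1..<T}. \<kappa> * e t) \<le> \<kappa> * S"
    using Ssub k0 by (simp add: sum_distrib_left[symmetric] mult_left_mono)
  then have "S \<le> L + \<kappa> * S" using rec PL unfolding d_def by linarith
  then have "S * (1 - \<kappa>) \<le> L" by (simp add: algebra_simps)
  then have SL: "S \<le> L / (1 - \<kappa>)" using k1 by (simp add: pos_le_divide_eq)
  have fx: "f t (x t) \<le> f t (th t) + G * e t" if t: "t \<in> {1..T}" for t
  proof -
    have a: "f t (x t) + inner (grad (f t) (x t)) (th t - x t) + \<alpha> / 2 * (norm (th t - x t))\<^sup>2 \<le> f t (th t)"
      using in_F_D(1)[OF F[OF t]] by blast
    have "- inner (grad (f t) (x t)) (th t - x t) \<le> norm (grad (f t) (x t)) * norm (th t - x t)"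
      using Cauchy_Schwarz_ineq2[of "grad (f t) (x t)" "th t - x t"] by linarith
    also have "\<dots> \<le> G * e t" unfolding e_def
      using in_F_D(3)[OF F[OF t]] xX[of t] by (simp add: norm_minus_commute mult_right_mono)
    finally have b: "- inner (grad (f t) (x t)) (th t - x t) \<le> G * e t" .
    have "0 \<le> \<alpha> / 2 * (norm (th t - x t))\<^sup>2" using assms by simp
    then show ?thesis using a b by linarith
  qed
  have costx: "cost \<beta> T f x \<le> (\<Sum>t=1..T. f t (th t) + G * e t) + (\<Sum>t\<in>{1..<T}. \<beta> / l * G * e t)"
    unfolding cost_def
  proof (rule sum_shift_le)
    have "f 1 (x 1) \<le> f 1 (th 1) + G * e 1" using fx assms by simp
    then show "f 1 (x 1) + \<beta> / 2 * (norm (x 1 - x (1 - 1)))\<^sup>2 \<le> f 1 (th 1) + G * e 1"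
      using x1 by (simp add: x_def)
  next
    fix t assume t: "1 \<le> t" "t < T"
    show "f (Suc t) (x (Suc t)) + \<beta> / 2 * (norm (x (Suc t) - x (Suc t - 1)))\<^sup>2
        \<le> f (Suc t) (th (Suc t)) + G * e (Suc t) + \<beta> / l * G * e t"
    proof -
      have tT: "t \<in> {1..T}" "Suc t \<in> {1..T}" using t by auto
      define s where "s = norm (x (Suc t) - x t)"
      have s0: "0 \<le> s" unfolding s_def by simp
      have sG: "s \<le> G / l" unfolding s_def using move[OF tT(1)] .
      have "s \<le> norm (x (Suc t) - th t) + e t" unfolding s_def e_def
        using norm_triangle_ineq[of "x (Suc t) - th t" "th t - x t"] by (simp add: norm_minus_commute)
      also have "\<dots> \<le> 2 * e t"
      proof -
        have "\<kappa> * e t \<le> 1 * e t" using k1 e0[of t] by (intro mult_right_mono) auto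
        then show ?thesis using contr[OF tT(1)] by linarith
      qed
      finally have s2: "s \<le> 2 * e t" .
      have "s\<^sup>2 \<le> (G / l) * (2 * e t)" unfolding power2_eq_square
        using mult_mono[OF sG s2] s0 l assms by simp
      then have "\<beta> / 2 * s\<^sup>2 \<le> \<beta> / 2 * ((G / l) * (2 * e t))"
        using assms by (intro mult_left_mono) auto
      also have "\<dots> = \<beta> / l * G * e t" by simp
      finally have sw: "\<beta> / 2 * s\<^sup>2 \<le> \<beta> / l * G * e t" .
      have st: "Suc t - 1 = t" by simp
      show ?thesis unfolding st using fx[OF tT(2)] sw unfolding s_def by linarith
    qed
  qed
  have costy: "(\<Sum>t=1..T. f t (th t)) \<le> cost \<beta> T f y"
    if "y \<in> {y. y 0 = x0 \<and> (\<forall>t\<in>{1..T}. y t \<in> X)}" for y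
    unfolding cost_def
  proof (rule sum_mono)
    fix t assume t: "t \<in> {1..T}"
    have "f t (th t) \<le> f t (y t)" using thX[OF t] that t by auto
    moreover have "0 \<le> \<beta> / 2 * (norm (y t - y (t - 1)))\<^sup>2" using assms by simp
    ultimately show "f t (th t) \<le> f t (y t) + \<beta> / 2 * (norm (y t - y (t - 1)))\<^sup>2" by linarith
  qed
  have inf: "(\<Sum>t=1..T. f t (th t)) \<le> (INF y\<in>{y. y 0 = x0 \<and> (\<forall>t\<in>{1..T}. y t \<in> X)}. cost \<beta> T f y)"
  proof (rule cINF_greatest)
    show "{y. y 0 = x0 \<and> (\<forall>t\<in>{1..T}. y t \<in> X)} \<noteq> {}" using x0X by (auto intro!: exI[of _ "\<lambda>_. x0"])
  qed (rule costy)
  have "(\<Sum>t\<in>{1..<T}. \<beta> / l * G * e t) = \<beta> / l * G * (\<Sum>t\<in>{1..<T}. e t)"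
    by (simp add: sum_distrib_left)
  also have "\<dots> \<le> \<beta> / l * G * S"
    using Ssub assms l by (intro mult_left_mono) auto
  finally have "dyn_regret X x0 \<beta> T f x \<le> G * S + \<beta> / l * G * S"
    using costx inf unfolding dyn_regret_def by (simp add: sum.distrib sum_distrib_left[symmetric] S_def)
  also have "\<dots> = (\<beta> / l + 1) * G * S" by (simp add: algebra_simps)
  also have "\<dots> \<le> (\<beta> / l + 1) * G * (L / (1 - \<kappa>))"
    using SL assms l by (intro mult_left_mono) auto
  finally show "dyn_regret X x0 \<beta> T f (ogd X (1 / l) f x0)
             \<le> (\<beta> / l + 1) * (G / (1 - sqrt (1 - \<alpha> / l))) * L"
    unfolding x_def \<kappa>_def by simp
qed

end
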